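(* Let $T=\mathbb C/\mathbb Z$ be the complex cylinder with coordinate $z_0=\theta+iy_0$ ($\theta\in S^1=\mathbb R/\mathbb Z$, $y_0\in\mathbb R$), let $z_1=x_1+iy_1\in\mathbb C$, and for $\epsilon>0$ let $M_\epsilon=\{(z_0,z_1)\in T\times\mathbb C: y_0^2+y_1^2<\epsilon^2\}$. For fixed $c\in\mathbb R$ let $G=\mathbb R$ act on $T\times\mathbb C$ by $\phi_c(t)(z_0,z_1)=(z_0+ct,\ z_1+t)$. Then this action is free, proper, cocompact on $\bar M_\epsilon$ and by biholomorphisms preserving $M_\epsilon$; for every point $p$ of the $\phi_c$-invariant set $\{(z_0,z_1): y_0^2+y_1^2=\epsilon^2,\ y_1=-cy_0\}\subset bM_\epsilon$ one has $T_p(G\cdot p)\subset T^c_p(bM_\epsilon)$; consequently $\dim_G L^2\mathcal O(M_\epsilon)=\infty$.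
   Context: $T^c_p(bM_\epsilon)=T_p(bM_\epsilon)\cap iT_p(bM_\epsilon)$. $L^2\mathcal O(M_\epsilon)$ is the space of square-integrable holomorphic functions on $M_\epsilon$ (with respect to a $G$-invariant measure smooth up to the boundary), and $\dim_G$ is the von Neumann $G$-dimension of a closed $G$-invariant subspace $L$ of $L^2$, namely $\mathrm{Tr}_G(P_L)$ with $P_L$ the orthogonal projection onto $L$ and $\mathrm{Tr}_G$ the canonical $G$-trace on $G$-invariant operators; spaces of positive $G$-dimension are infinite-dimensional over $\mathbb C$. *)

theory Defs
  imports "HOL-Analysis.Analysis"
begin

text \<open>Points of the cylinder T x C, T = C/Z, are represented by lifts (z0,z1) in C x C;
  two lifts represent the same point iff they differ by a deck translation
  (z0,z1) |-> (z0 + n, z1), n integer. Sets in T x C are represented by their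
  (deck-invariant) preimages in C x C.\<close>

type_synonym pt = "complex \<times> complex"

definition deck :: "int \<Rightarrow> pt \<Rightarrow> pt" where
  "deck n p = (fst p + of_int n, snd p)"

definition cyl_M :: "real \<Rightarrow> pt set" where
  "cyl_M \<epsilon> = {p. (Im (fst p))\<^sup>2 + (Im (snd p))\<^sup>2 < \<epsilon>\<^sup>2}"

definition phi :: "real \<Rightarrow> real \<Rightarrow> pt \<Rightarrow> pt" where
  "phi c t p = (fst p + of_real (c * t), snd p + of_real t)"

definition cyl_S :: "real \<Rightarrow> real \<Rightarrow> pt set" where
  "cyl_S \<epsilon> c = {p. (Im (fst p))\<^sup>2 + (Im (snd p))\<^sup>2 = \<epsilon>\<^sup>2 \<and> Im (snd p) = - c * Im (fst p)}"

definition cyl_orbit :: "real \<Rightarrow> pt \<Rightarrow> pt set" where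
  "cyl_orbit c p = {q. \<exists>t. \<exists>n::int. q = deck n (phi c t p)}"

definition cmult :: "complex \<Rightarrow> pt \<Rightarrow> pt" where
  "cmult a v = (a * fst v, a * snd v)"

definition holo2 :: "pt set \<Rightarrow> (pt \<Rightarrow> complex) \<Rightarrow> bool" where
  "holo2 S f \<longleftrightarrow> (\<forall>p\<in>S. \<exists>L. (f has_derivative L) (at p) \<and> (\<forall>a v. L (cmult a v) = a * L v))"

definition holo_map :: "pt set \<Rightarrow> (pt \<Rightarrow> pt) \<Rightarrow> bool" where
  "holo_map S F \<longleftrightarrow> holo2 S (\<lambda>p. fst (F p)) \<and> holo2 S (\<lambda>p. snd (F p))"

definition tangent_space :: "pt set \<Rightarrow> pt \<Rightarrow> pt set" where
  "tangent_space S p = {v. \<exists>\<gamma> :: real \<Rightarrow> pt. \<exists>\<delta>>0. (\<forall>s. \<bar>s\<bar> < \<delta> \<longrightarrow> \<gamma> s \<in> S) \<and>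
      \<gamma> 0 = p \<and> (\<gamma> has_vector_derivative v) (at 0)}"

definition ctangent_space :: "pt set \<Rightarrow> pt \<Rightarrow> pt set" where
  "ctangent_space S p = tangent_space S p \<inter> cmult \<i> ` tangent_space S p"

text \<open>Fundamental strip for the deck group (so integration over it = integration over T x C
  with the Lebesgue (G-invariant) measure), and fundamental domain {0 <= Re z1 < 1}
  of the G = R action.\<close>
definition cyl_strip :: "pt set" where
  "cyl_strip = {p. 0 \<le> Re (fst p) \<and> Re (fst p) < 1}"

definition G_fund :: "pt set" where
  "G_fund = {p. 0 \<le> Re (snd p) \<and> Re (snd p) < 1}"

definition l2inner :: "pt set \<Rightarrow> (pt \<Rightarrow> complex) \<Rightarrow> (pt \<Rightarrow> complex) \<Rightarrow> complex" where
  "l2inner X f g = set_lebesgue_integral lborel X (\<lambda>x. f x * cnj (g x))"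

definition l2norm2 :: "pt set \<Rightarrow> (pt \<Rightarrow> complex) \<Rightarrow> ennreal" where
  "l2norm2 X f = (\<integral>\<^sup>+ x\<in>X. ennreal ((cmod (f x))\<^sup>2) \<partial>lborel)"

text \<open>L^2 O(M_eps): holomorphic functions on M_eps (deck-periodic, i.e. functions on the
  quotient) that are square integrable on M_eps \<subseteq> T x C.\<close>
definition L2O :: "real \<Rightarrow> (pt \<Rightarrow> complex) set" where
  "L2O \<epsilon> = {f. holo2 (cyl_M \<epsilon>) f \<and> (\<forall>p\<in>cyl_M \<epsilon>. f (deck 1 p) = f p)
                 \<and> l2norm2 (cyl_strip \<inter> cyl_M \<epsilon>) f < \<infinity>}"

text \<open>von Neumann G-dimension dim_G L = Tr_G(P_L) = Tr(chi_U P_L chi_U), U a fundamental domain.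
  Since Tr(chi_U P_L chi_U) = Tr(P_L chi_U P_L) and the trace of a positive operator is
  the supremum over finite orthonormal families (e_i) of sum <A e_i, e_i>, this equals the
  supremum over finite orthonormal families (h_i) in L of sum ||chi_U h_i||^2.
  X is the domain of integration (M in T x C), U the fundamental domain part of X.\<close>
definition G_dim :: "pt set \<Rightarrow> pt set \<Rightarrow> (pt \<Rightarrow> complex) set \<Rightarrow> ennreal" where
  "G_dim X U L = (SUP nh \<in> {(n, h). (\<forall>i<n. h i \<in> L) \<and>
        (\<forall>i<n. \<forall>j<n. l2inner X (h i) (h j) = (if i = j then 1 else 0))}.
      (case nh of (n, h) \<Rightarrow> \<Sum>i<(n::nat). \<integral>\<^sup>+ x\<in>U. ennreal ((cmod (h i x))\<^sup>2) \<partial>lborel))"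

end

theory Submission
  imports Defs "HOL-Probability.Distributions"
begin


lemma Basis_pt: "(Basis :: pt set) = {(1,0),(\<i>,0),(0,1),(0,\<i>)}"
  by (auto simp: Basis_prod_def Basis_complex_def)

lemma Basis_src: "(Basis :: ((real\<times>real)\<times>complex) set) = {((1,0),0),((0,1),0),((0,0),1),((0,0),\<i>)}"
  by (simp add: Basis_prod_def Basis_complex_def Basis_real_def zero_prod_def insert_commute)

definition Lam :: "(real \<times> real) \<times> complex \<Rightarrow> pt" where
  "Lam z = (Complex (fst (fst z)) (Re (snd z)), Complex (snd (fst z)) (Im (snd z)))"

definition Lami :: "pt \<Rightarrow> (real \<times> real) \<times> complex" where
  "Lami p = ((Re (fst p), Re (snd p)), Complex (Im (fst p)) (Im (snd p)))"

lemma Lam_cont: "continuous_on UNIV Lam"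
  unfolding Lam_def by (intro continuous_intros) 

lemma Lam_meas[measurable]: "Lam \<in> borel_measurable borel"
  by (rule borel_measurable_continuous_onI[OF Lam_cont])

lemma Lam_pre: "Lam -` box l u = box (Lami l) (Lami u)"
  by (auto simp: mem_box Basis_pt Basis_src Lam_def Lami_def inner_prod_def inner_complex_def)

lemma distr_Lam: "distr lborel borel Lam = lborel"
proof (rule lborel_eqI[symmetric])
  fix l u :: pt assume le: "\<And>b. b \<in> Basis \<Longrightarrow> l \<bullet> b \<le> u \<bullet> b"
  have le': "\<And>b. b \<in> Basis \<Longrightarrow> Lami l \<bullet> b \<le> Lami u \<bullet> b"
    using le[of "(1,0)"] le[of "(\<i>,0)"] le[of "(0,1)"] le[of "(0,\<i>)"]
    by (auto simp: Basis_pt Basis_src Lami_def inner_prod_def inner_complex_def)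
  have "emeasure (distr lborel borel Lam) (box l u) = emeasure lborel (Lam -` box l u)"
    by (subst emeasure_distr) auto
  also have "\<dots> = (\<Prod>b\<in>Basis. (Lami u - Lami l) \<bullet> b)"
    unfolding Lam_pre by (rule emeasure_lborel_box[OF le'])
  also have "\<dots> = (\<Prod>b\<in>Basis. (u - l) \<bullet> b)"
    by (simp add: Basis_pt Basis_src Lami_def inner_prod_def inner_complex_def mult_ac)
  finally show "emeasure (distr lborel borel Lam) (box l u) = (\<Prod>b\<in>Basis. (u - l) \<bullet> b)" .
qed simp




lemma pair_prod_integral:
  fixes f :: "'a \<Rightarrow> 'k::{real_normed_field,banach,second_countable_topology}" and g :: "'b \<Rightarrow> 'k"
  assumes M: "sigma_finite_measure M1" "sigma_finite_measure M2"
    and f: "integrable M1 f" and g: "integrable M2 g"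
  shows "integrable (M1 \<Otimes>\<^sub>M M2) (\<lambda>z. f (fst z) * g (snd z))"
    and "integral\<^sup>L (M1 \<Otimes>\<^sub>M M2) (\<lambda>z. f (fst z) * g (snd z)) = integral\<^sup>L M1 f * integral\<^sup>L M2 g"
proof -
  interpret pair_sigma_finite M1 M2 using M by (simp add: pair_sigma_finite_def)
  have [measurable]: "f \<in> borel_measurable M1" "g \<in> borel_measurable M2" using f g by auto
  have "(\<integral>\<^sup>+ z. ennreal (norm (f (fst z) * g (snd z))) \<partial>(M1 \<Otimes>\<^sub>M M2))
      = (\<integral>\<^sup>+ x. \<integral>\<^sup>+ y. ennreal (norm (f x)) * ennreal (norm (g y)) \<partial>M2 \<partial>M1)"
    using M2.nn_integral_fst[where f="\<lambda>z. ennreal (norm (f (fst z))) * ennreal (norm (g (snd z)))"]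
    by (simp add: norm_mult ennreal_mult)
  also have "\<dots> = (\<integral>\<^sup>+ x. ennreal (norm (f x)) * (\<integral>\<^sup>+ y. ennreal (norm (g y)) \<partial>M2) \<partial>M1)"
    by (simp add: nn_integral_cmult)
  also have "\<dots> = (\<integral>\<^sup>+ x. ennreal (norm (f x)) \<partial>M1) * (\<integral>\<^sup>+ y. ennreal (norm (g y)) \<partial>M2)"
    by (simp add: nn_integral_multc)
  also have "\<dots> < \<infinity>"
    using f g by (simp add: integrable_iff_bounded ennreal_mult_less_top)
  finally have I: "integrable (M1 \<Otimes>\<^sub>M M2) (\<lambda>z. f (fst z) * g (snd z))"
    by (simp add: integrable_iff_bounded)
  then show "integrable (M1 \<Otimes>\<^sub>M M2) (\<lambda>z. f (fst z) * g (snd z))" .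
  have "integral\<^sup>L (M1 \<Otimes>\<^sub>M M2) (\<lambda>z. f (fst z) * g (snd z)) = (\<integral>x. \<integral>y. f x * g y \<partial>M2 \<partial>M1)"
    using integral_fst'[OF I] by simp
  also have "\<dots> = (\<integral>x. f x * integral\<^sup>L M2 g \<partial>M1)"
    by simp
  also have "\<dots> = integral\<^sup>L M1 f * integral\<^sup>L M2 g"
    by simp
  finally show "integral\<^sup>L (M1 \<Otimes>\<^sub>M M2) (\<lambda>z. f (fst z) * g (snd z)) = integral\<^sup>L M1 f * integral\<^sup>L M2 g" .
qed

lemma sf_lborel: "sigma_finite_measure (lborel :: ('a::euclidean_space) measure)"
  by (rule sigma_finite_lborel)

lemma pt_prod:
  fixes a b :: "real \<Rightarrow> 'k::{real_normed_field,banach,second_countable_topology}" and Q :: "complex \<Rightarrow> 'k"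
  assumes a: "integrable lborel a" and b: "integrable lborel b" and Q: "integrable lborel Q"
  shows "integrable lborel (\<lambda>p. a (Re (fst p)) * b (Re (snd p)) * Q (Complex (Im (fst p)) (Im (snd p))))"
    and "integral\<^sup>L lborel (\<lambda>p. a (Re (fst p)) * b (Re (snd p)) * Q (Complex (Im (fst p)) (Im (snd p))))
         = integral\<^sup>L lborel a * integral\<^sup>L lborel b * integral\<^sup>L lborel Q"
proof -
  let ?F = "\<lambda>p. a (Re (fst p)) * b (Re (snd p)) * Q (Complex (Im (fst p)) (Im (snd p)))"
  have [measurable]: "a \<in> borel_measurable borel" "b \<in> borel_measurable borel" "Q \<in> borel_measurable borel"
    using a b Q by auto
  have c1: "(\<lambda>p::pt. Re (fst p)) \<in> borel_measurable borel" "(\<lambda>p::pt. Re (snd p)) \<in> borel_measurable borel"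
    by (intro borel_measurable_continuous_onI continuous_intros)+
  have "continuous_on UNIV (\<lambda>p::pt. of_real (Im (fst p)) + \<i> * of_real (Im (snd p)))"
    by (intro continuous_intros)
  then have c2: "(\<lambda>p::pt. Complex (Im (fst p)) (Im (snd p))) \<in> borel_measurable borel"
    by (simp add: Complex_eq borel_measurable_continuous_onI)
  have Fm: "?F \<in> borel_measurable borel"
    using measurable_compose[OF c1(1), of a] measurable_compose[OF c1(2), of b] measurable_compose[OF c2, of Q]
    by simp
  have comp: "?F (Lam z) = (\<lambda>y. a (fst y) * b (snd y)) (fst z) * Q (snd z)" for z
    by (simp add: Lam_def)
  have i1: "integrable (lborel \<Otimes>\<^sub>M lborel) (\<lambda>y::real\<times>real. a (fst y) * b (snd y))"
    and e1: "integral\<^sup>L (lborel \<Otimes>\<^sub>M lborel) (\<lambda>y::real\<times>real. a (fst y) * b (snd y)) = integral\<^sup>L lborel a * integral\<^sup>L lborel b"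
    using pair_prod_integral[OF sf_lborel sf_lborel a b] by auto
  have i1': "integrable lborel (\<lambda>y::real\<times>real. a (fst y) * b (snd y))"
    using i1 by (simp add: lborel_prod)
  have e1': "integral\<^sup>L lborel (\<lambda>y::real\<times>real. a (fst y) * b (snd y)) = integral\<^sup>L lborel a * integral\<^sup>L lborel b"
    using e1 by (simp add: lborel_prod)
  have i2: "integrable (lborel \<Otimes>\<^sub>M lborel) (\<lambda>z::(real\<times>real)\<times>complex. (\<lambda>y. a (fst y) * b (snd y)) (fst z) * Q (snd z))"
    and e2: "integral\<^sup>L (lborel \<Otimes>\<^sub>M lborel) (\<lambda>z::(real\<times>real)\<times>complex. (\<lambda>y. a (fst y) * b (snd y)) (fst z) * Q (snd z))
       = integral\<^sup>L lborel (\<lambda>y::real\<times>real. a (fst y) * b (snd y)) * integral\<^sup>L lborel Q"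
    using pair_prod_integral[OF sf_lborel sf_lborel i1' Q] by auto
  have i2': "integrable lborel (\<lambda>z. ?F (Lam z))"
    using i2 by (simp add: lborel_prod comp)
  have e2': "integral\<^sup>L lborel (\<lambda>z. ?F (Lam z)) = integral\<^sup>L lborel a * integral\<^sup>L lborel b * integral\<^sup>L lborel Q"
    using e2 e1' by (simp add: lborel_prod comp)
  show "integrable lborel ?F"
    using i2' integrable_distr_eq[of Lam lborel borel ?F] Fm by (simp add: distr_Lam)
  show "integral\<^sup>L lborel ?F = integral\<^sup>L lborel a * integral\<^sup>L lborel b * integral\<^sup>L lborel Q"
    using e2' integral_distr[of Lam lborel borel ?F] Fm by (simp add: distr_Lam)
qed




definition ga :: "int \<Rightarrow> real \<Rightarrow> complex" where
  "ga n t = indicator {0..<1} t *\<^sub>R exp (2 * pi * \<i> * of_int n * of_real t)"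

lemma ga_int: "integrable lborel (ga n)"
proof -
  have "continuous_on {0..1} (\<lambda>t::real. exp (2 * pi * \<i> * of_int n * of_real t))"
    by (intro continuous_intros)
  then have "integrable lborel (\<lambda>t::real. indicator {0..1} t *\<^sub>R exp (2 * pi * \<i> * of_int n * of_real t))"
    by (intro borel_integrable_compact) auto
  then have "integrable lborel (\<lambda>t::real. indicator {0..<1} t *\<^sub>R (indicator {0..1} t *\<^sub>R exp (2 * pi * \<i> * of_int n * of_real t)))"
    by (rule integrable_mult_indicator[rotated]) auto
  moreover have "(\<lambda>t::real. indicator {0..<1} t *\<^sub>R (indicator {0..1} t *\<^sub>R exp (2 * pi * \<i> * of_int n * of_real t))) = ga n"
    by (auto simp: ga_def fun_eq_iff split: split_indicator)
  ultimately show ?thesis by simp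
qed

lemma ga_integral: "integral\<^sup>L lborel (ga n) = (if n = 0 then 1 else 0)"
proof (cases "n = 0")
  case True
  then have "ga n = (\<lambda>t. complex_of_real (indicator {0..<1} t))"
    by (auto simp: ga_def fun_eq_iff split: split_indicator)
  then show ?thesis using True by simp
next
  case False
  let ?c = "2 * pi * \<i> * of_int n"
  let ?f = "\<lambda>t::real. exp (?c * of_real t)"
  have c0: "?c \<noteq> 0" using False by simp
  have "integral\<^sup>L lborel (ga n) = integral\<^sup>L lborel (\<lambda>t. indicator {0..1} t *\<^sub>R ?f t)"
  proof (rule integral_cong_AE)
    show "AE x in lborel. ga n x = indicator {0..1} x *\<^sub>R ?f x"
      using AE_lborel_singleton[of 1]
      by eventually_elim (auto simp: ga_def split: split_indicator)
  qed (use ga_int in auto)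
  also have "\<dots> = integral {0..1} ?f"
  proof -
    have "continuous_on {0..1} ?f" by (intro continuous_intros)
    then have "set_integrable lborel {0..1} ?f"
      unfolding set_integrable_def by (intro borel_integrable_compact) auto
    then show ?thesis
      using set_borel_integral_eq_integral(2) by (simp add: set_lebesgue_integral_def)
  qed
  also have "\<dots> = exp (?c * of_real 1) / ?c - exp (?c * of_real 0) / ?c"
  proof (rule integral_unique, rule fundamental_theorem_of_calculus)
    fix x :: real assume "x \<in> {0..1}"
    have "((\<lambda>z. exp (?c * z) / ?c) has_field_derivative exp (?c * of_real x)) (at (of_real x))"
      using c0 by (auto intro!: derivative_eq_intros)
    then show "((\<lambda>t. exp (?c * of_real t) / ?c) has_vector_derivative ?f x) (at x within {0..1})"
      by (rule has_vector_derivative_real_field)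
  qed simp
  also have "exp (?c * of_real 1) = 1"
    by (simp add: exp_eq_1)
  finally show ?thesis using False by simp
qed

definition gb :: "real \<Rightarrow> real" where "gb x = exp (- x\<^sup>2 / 2)"
definition gb' :: "real \<Rightarrow> real" where "gb' x = indicator {0..<1} x * exp (- x\<^sup>2 / 2)"

lemma gb_eq: "gb = (\<lambda>x. sqrt (2*pi) * std_normal_density x)"
  by (auto simp: gb_def std_normal_density_def fun_eq_iff)

lemma gb_int: "integrable lborel gb"
  unfolding gb_eq by simp

lemma gb_integral: "integral\<^sup>L lborel gb = sqrt (2*pi)"
  unfolding gb_eq by simp

lemma gb'_int: "integrable lborel gb'"
proof -
  have "integrable lborel (\<lambda>x. indicator {0..<1} x *\<^sub>R gb x)"
    by (intro integrable_mult_indicator gb_int) auto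
  moreover have "(\<lambda>x. indicator {0..<1} x *\<^sub>R gb x) = gb'"
    by (simp add: fun_eq_iff gb'_def gb_def)
  ultimately show ?thesis by simp
qed

lemma gb'_pos: "integral\<^sup>L lborel gb' > 0"
proof -
  have "integral\<^sup>L lborel (\<lambda>x::real. exp (- 1/2) * indicator {0..<1} x) \<le> integral\<^sup>L lborel gb'"
  proof (rule Bochner_Integration.integral_mono[where M=lborel])
    show "integrable lborel (\<lambda>x::real. exp (- 1/2) * indicator {0..<1} x :: real)"
      using integrable_real_indicator[of "{0..<1::real}" lborel] by simp
    show "integrable lborel gb'" by (rule gb'_int)
    fix x :: real
    show "exp (- 1/2) * indicator {0..<1} x \<le> gb' x"
    proof (cases "x \<in> {0..<1}")
      case True
      then have "x\<^sup>2 \<le> 1" by (simp add: power_le_one)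
      then show ?thesis using True by (simp add: gb'_def)
    qed (simp add: gb'_def)
  qed
  moreover have "integral\<^sup>L lborel (\<lambda>x::real. exp (- 1/2) * indicator {0..<1} x :: real) = exp (-1/2)"
    by simp
  ultimately show ?thesis by (smt (verit) exp_gt_zero)
qed




definition gQ :: "real \<Rightarrow> real \<Rightarrow> complex \<Rightarrow> real" where
  "gQ \<epsilon> s w = indicator (ball 0 \<epsilon>) w * (exp (- 2 * pi * s * Re w) * exp ((Im w)\<^sup>2 / 2))"

lemma gQ_int: "integrable lborel (gQ \<epsilon> s)"
proof -
  have "continuous_on (cball 0 \<epsilon>) (\<lambda>w::complex. exp (- 2 * pi * s * Re w) * exp ((Im w)\<^sup>2 / 2))"
    by (intro continuous_intros) auto
  then have "integrable lborel (\<lambda>w::complex. indicator (cball 0 \<epsilon>) w *\<^sub>R (exp (- 2 * pi * s * Re w) * exp ((Im w)\<^sup>2 / 2)))"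
    by (intro borel_integrable_compact) auto
  then have "integrable lborel (\<lambda>w::complex. indicator (ball 0 \<epsilon>) w *\<^sub>R (indicator (cball 0 \<epsilon>) w *\<^sub>R (exp (- 2 * pi * s * Re w) * exp ((Im w)\<^sup>2 / 2))))"
    by (rule integrable_mult_indicator[rotated]) auto
  moreover have "(\<lambda>w::complex. indicator (ball 0 \<epsilon>) w *\<^sub>R (indicator (cball 0 \<epsilon>) w *\<^sub>R (exp (- 2 * pi * s * Re w) * exp ((Im w)\<^sup>2 / 2)))) = gQ \<epsilon> s"
    by (auto simp: gQ_def fun_eq_iff split: split_indicator)
  ultimately show ?thesis by simp
qed

lemma gQ_pos:
  assumes e: "\<epsilon> > 0" and s: "s \<ge> 0"
  shows "integral\<^sup>L lborel (gQ \<epsilon> s) > 0"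
proof -
  have "integral\<^sup>L lborel (\<lambda>w::complex. exp (- 2 * pi * s * \<epsilon>) * indicator (ball 0 \<epsilon>) w) \<le> integral\<^sup>L lborel (gQ \<epsilon> s)"
  proof (rule Bochner_Integration.integral_mono[where M=lborel])
    show "integrable lborel (\<lambda>w::complex. exp (- 2 * pi * s * \<epsilon>) * indicator (ball 0 \<epsilon>) w :: real)"
    proof -
      have "integrable lborel (indicator (ball (0::complex) \<epsilon>) :: complex \<Rightarrow> real)"
        using emeasure_lborel_ball_finite[of "0::complex" \<epsilon>] by (intro integrable_real_indicator) (auto simp: infinity_ennreal_def)
      then show ?thesis by simp
    qed
    show "integrable lborel (gQ \<epsilon> s)" by (rule gQ_int)
    fix w :: complex
    show "exp (- 2 * pi * s * \<epsilon>) * indicator (ball 0 \<epsilon>) w \<le> gQ \<epsilon> s w"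
    proof (cases "w \<in> ball 0 \<epsilon>")
      case True
      then have "\<bar>Re w\<bar> \<le> \<epsilon>" using abs_Re_le_cmod[of w] by simp
      then have "- 2 * pi * s * \<epsilon> \<le> - 2 * pi * s * Re w"
        using s by (simp add: mult_left_mono)
      then have "exp (- 2 * pi * s * \<epsilon>) \<le> exp (- 2 * pi * s * Re w)" by simp
      moreover have "1 \<le> exp ((Im w)\<^sup>2 / 2)" by simp
      ultimately have "exp (- 2 * pi * s * \<epsilon>) * 1 \<le> exp (- 2 * pi * s * Re w) * exp ((Im w)\<^sup>2 / 2)"
        by (intro mult_mono) auto
      then show ?thesis using True by (simp add: gQ_def)
    qed (simp add: gQ_def)
  qed
  moreover have "integral\<^sup>L lborel (\<lambda>w::complex. exp (- 2 * pi * s * \<epsilon>) * indicator (ball 0 \<epsilon>) w :: real)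
     = exp (- 2 * pi * s * \<epsilon>) * measure lborel (ball (0::complex) \<epsilon>)"
    by simp
  moreover have "measure lborel (ball (0::complex) \<epsilon>) > 0"
    using content_ball_pos[OF e] by simp
  ultimately show ?thesis
    by (smt (verit) exp_gt_zero mult_pos_pos)
qed




definition hk :: "nat \<Rightarrow> pt \<Rightarrow> complex" where
  "hk k p = exp (2 * pi * \<i> * of_nat k * fst p) * exp (- (snd p)\<^sup>2 / 4)"

lemma hk_prod:
  "hk k p * cnj (hk m p) = exp (2 * pi * \<i> * of_int (int k - int m) * of_real (Re (fst p))) *
     of_real (exp (- 2 * pi * (real k + real m) * Im (fst p)) * exp ((Im (snd p))\<^sup>2 / 2) * exp (- (Re (snd p))\<^sup>2 / 2))"
proof -
  obtain a b c d where p: "p = (Complex a b, Complex c d)"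
    by (metis complex.exhaust prod.exhaust)
  have L: "hk k p * cnj (hk m p) = exp (2 * pi * \<i> * of_nat k * Complex a b + cnj (2 * pi * \<i> * of_nat m * Complex a b)
      + (- (Complex c d)\<^sup>2 / 4) + cnj (- (Complex c d)\<^sup>2 / 4))"
    unfolding hk_def p by (simp add: exp_cnj mult_exp_exp algebra_simps)
  have R: "exp (2 * pi * \<i> * of_int (int k - int m) * of_real (Re (fst p))) *
     of_real (exp (- 2 * pi * (real k + real m) * Im (fst p)) * exp ((Im (snd p))\<^sup>2 / 2) * exp (- (Re (snd p))\<^sup>2 / 2))
     = exp (2 * pi * \<i> * of_int (int k - int m) * of_real a + of_real (- 2 * pi * (real k + real m) * b) + of_real ((d)\<^sup>2 / 2) + of_real (- (c)\<^sup>2 / 2))"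
    by (simp add: p exp_of_real[symmetric] mult_exp_exp algebra_simps)
  have E: "2 * pi * \<i> * of_nat k * Complex a b + cnj (2 * pi * \<i> * of_nat m * Complex a b)
      + (- (Complex c d)\<^sup>2 / 4) + cnj (- (Complex c d)\<^sup>2 / 4)
      = 2 * pi * \<i> * of_int (int k - int m) * of_real a + of_real (- 2 * pi * (real k + real m) * b) + of_real ((d)\<^sup>2 / 2) + of_real (- (c)\<^sup>2 / 2)"
    by (simp add: complex_eq_iff power2_eq_square algebra_simps)
  show ?thesis using L R E by simp
qed




lemma M_ball:
  assumes "\<epsilon> > 0"
  shows "(p \<in> cyl_M \<epsilon>) = (Complex (Im (fst p)) (Im (snd p)) \<in> ball 0 \<epsilon>)"
proof -
  have "cmod (Complex (Im (fst p)) (Im (snd p))) = sqrt ((Im (fst p))\<^sup>2 + (Im (snd p))\<^sup>2)"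
    by (simp add: cmod_def)
  moreover have "sqrt ((Im (fst p))\<^sup>2 + (Im (snd p))\<^sup>2) < \<epsilon> \<longleftrightarrow> (Im (fst p))\<^sup>2 + (Im (snd p))\<^sup>2 < \<epsilon>\<^sup>2"
    using assms by (metis abs_of_pos real_sqrt_abs real_sqrt_less_iff)
  ultimately show ?thesis by (simp add: cyl_M_def)
qed

lemma ind_X:
  assumes "\<epsilon> > 0"
  shows "indicator (cyl_strip \<inter> cyl_M \<epsilon>) p = (indicator {0..<1} (Re (fst p)) * indicator (ball 0 \<epsilon>) (Complex (Im (fst p)) (Im (snd p))) :: real)"
  using M_ball[OF assms, of p] by (auto simp: cyl_strip_def split: split_indicator)

lemma ind_U:
  assumes "\<epsilon> > 0"
  shows "indicator (cyl_strip \<inter> cyl_M \<epsilon> \<inter> G_fund) p = (indicator {0..<1} (Re (fst p)) * indicator {0..<1} (Re (snd p)) * indicator (ball 0 \<epsilon>) (Complex (Im (fst p)) (Im (snd p))) :: real)"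
  using M_ball[OF assms, of p] by (auto simp: cyl_strip_def G_fund_def split: split_indicator)

lemma PC:
  assumes "\<epsilon> > 0"
  shows "indicator (cyl_strip \<inter> cyl_M \<epsilon>) p *\<^sub>R (hk k p * cnj (hk m p))
    = ga (int k - int m) (Re (fst p)) * of_real (gb (Re (snd p))) * of_real (gQ \<epsilon> (real k + real m) (Complex (Im (fst p)) (Im (snd p))))"
  unfolding ind_X[OF assms] hk_prod ga_def gb_def gQ_def
  by (simp split: split_indicator)

lemma cmod_hk: "(cmod (hk k p))\<^sup>2 = exp (- 2 * pi * (2 * real k) * Im (fst p)) * exp ((Im (snd p))\<^sup>2 / 2) * exp (- (Re (snd p))\<^sup>2 / 2)"
proof -
  have "complex_of_real ((cmod (hk k p))\<^sup>2) = hk k p * cnj (hk k p)"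
    by (rule complex_norm_square)
  also have "\<dots> = of_real (exp (- 2 * pi * (2 * real k) * Im (fst p)) * exp ((Im (snd p))\<^sup>2 / 2) * exp (- (Re (snd p))\<^sup>2 / 2))"
    unfolding hk_prod by simp
  finally show ?thesis by (simp only: of_real_eq_iff)
qed

lemma PR:
  assumes "\<epsilon> > 0"
  shows "indicator (cyl_strip \<inter> cyl_M \<epsilon>) p * (cmod (hk k p))\<^sup>2
    = indicator {0..<1} (Re (fst p)) * gb (Re (snd p)) * gQ \<epsilon> (2 * real k) (Complex (Im (fst p)) (Im (snd p)))"
  unfolding ind_X[OF assms] cmod_hk gb_def gQ_def
  by (simp split: split_indicator)

lemma PU:
  assumes "\<epsilon> > 0"
  shows "indicator (cyl_strip \<inter> cyl_M \<epsilon> \<inter> G_fund) p * (cmod (hk k p))\<^sup>2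
    = indicator {0..<1} (Re (fst p)) * gb' (Re (snd p)) * gQ \<epsilon> (2 * real k) (Complex (Im (fst p)) (Im (snd p)))"
  unfolding ind_U[OF assms] cmod_hk gb'_def gQ_def
  by (simp split: split_indicator)

lemma ind01_int: "integrable lborel (indicator {0..<1::real} :: real \<Rightarrow> real)"
  by (rule integrable_real_indicator) auto

lemma cross:
  assumes e: "\<epsilon> > 0"
  shows "l2inner (cyl_strip \<inter> cyl_M \<epsilon>) (hk k) (hk m)
     = (if k = m then of_real (sqrt (2*pi) * integral\<^sup>L lborel (gQ \<epsilon> (2 * real k))) else 0)"
proof -
  have "l2inner (cyl_strip \<inter> cyl_M \<epsilon>) (hk k) (hk m)
    = integral\<^sup>L lborel (\<lambda>p. ga (int k - int m) (Re (fst p)) * of_real (gb (Re (snd p))) * of_real (gQ \<epsilon> (real k + real m) (Complex (Im (fst p)) (Im (snd p)))))"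
    unfolding l2inner_def set_lebesgue_integral_def PC[OF e] ..
  also have "\<dots> = integral\<^sup>L lborel (ga (int k - int m)) * integral\<^sup>L lborel (\<lambda>x. complex_of_real (gb x))
      * integral\<^sup>L lborel (\<lambda>w. complex_of_real (gQ \<epsilon> (real k + real m) w))"
    by (rule pt_prod(2)) (auto intro: ga_int gb_int gQ_int)
  also have "\<dots> = (if k = m then of_real (sqrt (2*pi) * integral\<^sup>L lborel (gQ \<epsilon> (2 * real k))) else 0)"
    by (simp add: ga_integral gb_integral)
  finally show ?thesis .
qed

lemma normX:
  assumes e: "\<epsilon> > 0"
  shows "integrable lborel (\<lambda>p. indicator (cyl_strip \<inter> cyl_M \<epsilon>) p * (cmod (hk k p))\<^sup>2)"
    and "integral\<^sup>L lborel (\<lambda>p. indicator (cyl_strip \<inter> cyl_M \<epsilon>) p * (cmod (hk k p))\<^sup>2) = sqrt (2*pi) * integral\<^sup>L lborel (gQ \<epsilon> (2 * real k))"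
  unfolding PR[OF e]
  using pt_prod[OF ind01_int gb_int gQ_int[of \<epsilon> "2 * real k"]] by (auto simp: gb_integral)

lemma normU:
  assumes e: "\<epsilon> > 0"
  shows "integrable lborel (\<lambda>p. indicator (cyl_strip \<inter> cyl_M \<epsilon> \<inter> G_fund) p * (cmod (hk k p))\<^sup>2)"
    and "integral\<^sup>L lborel (\<lambda>p. indicator (cyl_strip \<inter> cyl_M \<epsilon> \<inter> G_fund) p * (cmod (hk k p))\<^sup>2) = integral\<^sup>L lborel gb' * integral\<^sup>L lborel (gQ \<epsilon> (2 * real k))"
  unfolding PU[OF e]
  using pt_prod[OF ind01_int gb'_int gQ_int[of \<epsilon> "2 * real k"]] by auto




definition Nk :: "real \<Rightarrow> nat \<Rightarrow> real" where
  "Nk \<epsilon> k = sqrt (2*pi) * integral\<^sup>L lborel (gQ \<epsilon> (2 * real k))"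

definition hn :: "real \<Rightarrow> nat \<Rightarrow> pt \<Rightarrow> complex" where
  "hn \<epsilon> k p = of_real (1 / sqrt (Nk \<epsilon> k)) * hk k p"

lemma Nk_pos: "\<epsilon> > 0 \<Longrightarrow> Nk \<epsilon> k > 0"
  unfolding Nk_def using gQ_pos[of \<epsilon> "2 * real k"] by simp

lemma hd_fst: "(F has_field_derivative D) (at (fst p)) \<Longrightarrow> ((\<lambda>q::pt. F (fst q)) has_derivative (\<lambda>v. D * fst v)) (at p)"
  using has_derivative_compose[OF has_derivative_fst[OF has_derivative_ident], of F "(*) D"]
  by (simp add: has_field_derivative_def)

lemma hd_snd: "(F has_field_derivative D) (at (snd p)) \<Longrightarrow> ((\<lambda>q::pt. F (snd q)) has_derivative (\<lambda>v. D * snd v)) (at p)"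
  using has_derivative_compose[OF has_derivative_snd[OF has_derivative_ident], of F "(*) D"]
  by (simp add: has_field_derivative_def)

lemma hn_holo: "holo2 S (hn \<epsilon> k)"
  unfolding holo2_def
proof
  fix p :: pt
  let ?c = "complex_of_real (1 / sqrt (Nk \<epsilon> k))"
  let ?\<alpha> = "2 * pi * \<i> * of_nat k :: complex"
  have F0: "((\<lambda>z. exp (?\<alpha> * z)) has_field_derivative (?\<alpha> * exp (?\<alpha> * fst p))) (at (fst p))"
    by (auto intro!: derivative_eq_intros simp: mult.commute)
  have F: "((\<lambda>z. ?c * exp (?\<alpha> * z)) has_field_derivative (?c * (?\<alpha> * exp (?\<alpha> * fst p)))) (at (fst p))"
    by (rule DERIV_cmult[OF F0])
  have G: "((\<lambda>z. exp (- z\<^sup>2 / 4)) has_field_derivative (exp (- (snd p)\<^sup>2 / 4) * (- snd p / 2))) (at (snd p))"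
    by (auto intro!: derivative_eq_intros simp: algebra_simps)
  have D: "((\<lambda>q. ?c * exp (?\<alpha> * fst q) * exp (- (snd q)\<^sup>2 / 4)) has_derivative
     (\<lambda>v. ?c * exp (?\<alpha> * fst p) * ((exp (- (snd p)\<^sup>2 / 4) * (- snd p / 2)) * snd v) + (?c * (?\<alpha> * exp (?\<alpha> * fst p))) * fst v * exp (- (snd p)\<^sup>2 / 4))) (at p)"
    using has_derivative_mult[OF hd_fst[OF F] hd_snd[OF G]] by simp
  let ?L = "\<lambda>v. ?c * exp (?\<alpha> * fst p) * ((exp (- (snd p)\<^sup>2 / 4) * (- snd p / 2)) * snd v) + (?c * (?\<alpha> * exp (?\<alpha> * fst p))) * fst v * exp (- (snd p)\<^sup>2 / 4)"
  have "(hn \<epsilon> k has_derivative ?L) (at p)"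
    using D unfolding hn_def hk_def by (simp add: mult.assoc)
  moreover have "\<forall>a v. ?L (cmult a v) = a * ?L v"
    by (simp add: cmult_def algebra_simps)
  ultimately show "\<exists>L. (hn \<epsilon> k has_derivative L) (at p) \<and> (\<forall>a v. L (cmult a v) = a * L v)"
    by blast
qed

lemma hn_per: "hn \<epsilon> k (deck 1 p) = hn \<epsilon> k p"
proof -
  have "exp (2 * pi * \<i> * of_nat k * (fst p + 1)) = exp (2 * pi * \<i> * of_nat k * fst p) * exp (2 * pi * \<i> * of_nat k)"
    by (simp add: distrib_left exp_add)
  moreover have "exp (2 * pi * \<i> * of_nat k) = 1"
    using exp_of_nat_mult[of k "2 * pi * \<i>"] exp_two_pi_i by (simp add: mult_ac)
  ultimately show ?thesis by (simp add: hn_def hk_def deck_def)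
qed

lemma hn_norm_eq: "indicator A p * (cmod (hn \<epsilon> k p))\<^sup>2 = (1 / Nk \<epsilon> k) * (indicator A p * (cmod (hk k p))\<^sup>2)"
  if "\<epsilon> > 0" for A p
  using Nk_pos[OF that, of k]
  by (simp add: hn_def norm_mult norm_divide power_divide power_mult_distrib)




lemma setnn_eq:
  fixes g :: "pt \<Rightarrow> real"
  assumes "integrable lborel (\<lambda>x. indicator A x * g x)" and "\<And>x. g x \<ge> 0"
  shows "(\<integral>\<^sup>+x\<in>A. ennreal (g x) \<partial>lborel) = ennreal (integral\<^sup>L lborel (\<lambda>x. indicator A x * g x))"
proof -
  have "(\<integral>\<^sup>+x\<in>A. ennreal (g x) \<partial>lborel) = (\<integral>\<^sup>+x. ennreal (indicator A x * g x) \<partial>lborel)"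
    by (intro nn_integral_cong) (auto split: split_indicator)
  also have "\<dots> = ennreal (integral\<^sup>L lborel (\<lambda>x. indicator A x * g x))"
    by (rule nn_integral_eq_integral[OF assms(1)]) (auto intro!: AE_I2 mult_nonneg_nonneg assms(2))
  finally show ?thesis .
qed

lemma hn_int:
  assumes e: "\<epsilon> > 0"
  shows "integrable lborel (\<lambda>x. indicator (cyl_strip \<inter> cyl_M \<epsilon>) x * (cmod (hn \<epsilon> k x))\<^sup>2)"
    and "integrable lborel (\<lambda>x. indicator (cyl_strip \<inter> cyl_M \<epsilon> \<inter> G_fund) x * (cmod (hn \<epsilon> k x))\<^sup>2)"
  unfolding hn_norm_eq[OF e]
  by (intro integrable_mult_right normX[OF e] normU[OF e])+

lemma hn_L2O:
  assumes e: "\<epsilon> > 0"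
  shows "hn \<epsilon> k \<in> L2O \<epsilon>"
proof -
  have "l2norm2 (cyl_strip \<inter> cyl_M \<epsilon>) (hn \<epsilon> k) = ennreal (integral\<^sup>L lborel (\<lambda>x. indicator (cyl_strip \<inter> cyl_M \<epsilon>) x * (cmod (hn \<epsilon> k x))\<^sup>2))"
    unfolding l2norm2_def by (rule setnn_eq[OF hn_int(1)[OF e]]) auto
  then have "l2norm2 (cyl_strip \<inter> cyl_M \<epsilon>) (hn \<epsilon> k) < \<infinity>" by simp
  then show ?thesis
    unfolding L2O_def using hn_holo hn_per by auto
qed

lemma hn_ortho:
  assumes e: "\<epsilon> > 0"
  shows "l2inner (cyl_strip \<inter> cyl_M \<epsilon>) (hn \<epsilon> i) (hn \<epsilon> j) = (if i = j then 1 else 0)"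
proof -
  let ?X = "cyl_strip \<inter> cyl_M \<epsilon>"
  let ?ci = "1 / sqrt (Nk \<epsilon> i)" and ?cj = "1 / sqrt (Nk \<epsilon> j)"
  have "l2inner ?X (hn \<epsilon> i) (hn \<epsilon> j) = integral\<^sup>L lborel (\<lambda>x. complex_of_real (?ci * ?cj) * (indicator ?X x *\<^sub>R (hk i x * cnj (hk j x))))"
    unfolding l2inner_def set_lebesgue_integral_def
    by (intro Bochner_Integration.integral_cong) (auto simp: hn_def split: split_indicator)
  also have "\<dots> = complex_of_real (?ci * ?cj) * l2inner ?X (hk i) (hk j)"
    unfolding l2inner_def set_lebesgue_integral_def by (rule integral_mult_right_zero)
  also have "\<dots> = (if i = j then 1 else 0)"
    using Nk_pos[OF e, of i] unfolding cross[OF e] Nk_def[symmetric]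
    by (auto simp: real_sqrt_mult[symmetric])
  finally show ?thesis .
qed

definition dlt :: real where "dlt = integral\<^sup>L lborel gb' / sqrt (2*pi)"

lemma dlt_pos: "dlt > 0"
  unfolding dlt_def using gb'_pos by simp

lemma hn_U:
  assumes e: "\<epsilon> > 0"
  shows "(\<integral>\<^sup>+x\<in>cyl_strip \<inter> cyl_M \<epsilon> \<inter> G_fund. ennreal ((cmod (hn \<epsilon> k x))\<^sup>2) \<partial>lborel) = ennreal dlt"
proof -
  have "(\<integral>\<^sup>+x\<in>cyl_strip \<inter> cyl_M \<epsilon> \<inter> G_fund. ennreal ((cmod (hn \<epsilon> k x))\<^sup>2) \<partial>lborel)
     = ennreal (integral\<^sup>L lborel (\<lambda>x. indicator (cyl_strip \<inter> cyl_M \<epsilon> \<inter> G_fund) x * (cmod (hn \<epsilon> k x))\<^sup>2))"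
    by (rule setnn_eq[OF hn_int(2)[OF e]]) auto
  also have "integral\<^sup>L lborel (\<lambda>x. indicator (cyl_strip \<inter> cyl_M \<epsilon> \<inter> G_fund) x * (cmod (hn \<epsilon> k x))\<^sup>2) = dlt"
    unfolding hn_norm_eq[OF e] using Nk_pos[OF e, of k] gQ_pos[OF e, of "2 * real k"]
    by (simp add: normU(2)[OF e] Nk_def dlt_def)
  finally show ?thesis .
qed

lemma ennreal_unbounded:
  fixes S :: ennreal
  assumes le: "\<And>n::nat. ennreal (real n * d) \<le> S" and d: "d > 0"
  shows "S = \<infinity>"
proof (rule ccontr)
  assume "S \<noteq> \<infinity>"
  then obtain r where r: "S = ennreal r" "r \<ge> 0" by (cases S) auto
  obtain n :: nat where n: "r / d < real n" using reals_Archimedean2 by blast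
  then have "r < real n * d" using d by (simp add: divide_less_eq)
  moreover have "real n * d \<le> r" using le[of n] r d by (simp add: ennreal_le_iff)
  ultimately show False by simp
qed

lemma Gdim_inf:
  assumes e: "\<epsilon> > 0"
  shows "G_dim (cyl_strip \<inter> cyl_M \<epsilon>) (cyl_strip \<inter> cyl_M \<epsilon> \<inter> G_fund) (L2O \<epsilon>) = \<infinity>"
proof (rule ennreal_unbounded[OF _ dlt_pos])
  fix n :: nat
  have mem: "(n, hn \<epsilon>) \<in> {(n, h). (\<forall>i<n. h i \<in> L2O \<epsilon>) \<and>
        (\<forall>i<n. \<forall>j<n. l2inner (cyl_strip \<inter> cyl_M \<epsilon>) (h i) (h j) = (if i = j then 1 else 0))}"
    using hn_L2O[OF e] hn_ortho[OF e] by auto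
  have "ennreal (real n * dlt) = (case (n, hn \<epsilon>) of (n, h) \<Rightarrow> \<Sum>i<(n::nat). \<integral>\<^sup>+ x\<in>(cyl_strip \<inter> cyl_M \<epsilon> \<inter> G_fund). ennreal ((cmod (h i x))\<^sup>2) \<partial>lborel)"
    using dlt_pos by (simp add: hn_U[OF e] ennreal_mult ennreal_of_nat_eq_real_of_nat)
  also have "\<dots> \<le> G_dim (cyl_strip \<inter> cyl_M \<epsilon>) (cyl_strip \<inter> cyl_M \<epsilon> \<inter> G_fund) (L2O \<epsilon>)"
    unfolding G_dim_def by (rule SUP_upper[OF mem])
  finally show "ennreal (real n * dlt) \<le> G_dim (cyl_strip \<inter> cyl_M \<epsilon>) (cyl_strip \<inter> cyl_M \<epsilon> \<inter> G_fund) (L2O \<epsilon>)" .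
qed




lemma cylM_open: "open (cyl_M \<epsilon>)"
proof -
  have "open {p::pt. (Im (fst p))\<^sup>2 + (Im (snd p))\<^sup>2 < \<epsilon>\<^sup>2}"
    by (intro open_Collect_less continuous_intros)
  then show ?thesis by (simp add: cyl_M_def)
qed

lemma sphere_frontier:
  assumes e: "\<epsilon> > 0"
  shows "{p. (Im (fst p))\<^sup>2 + (Im (snd p))\<^sup>2 = \<epsilon>\<^sup>2} \<subseteq> frontier (cyl_M \<epsilon>)"
proof
  fix p :: pt assume "p \<in> {p. (Im (fst p))\<^sup>2 + (Im (snd p))\<^sup>2 = \<epsilon>\<^sup>2}"
  then have pe: "(Im (fst p))\<^sup>2 + (Im (snd p))\<^sup>2 = \<epsilon>\<^sup>2" by simp
  define l :: "nat \<Rightarrow> real" where "l j = 1 - inverse (real (Suc j))" for j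
  define x where "x j = (complex_of_real (Re (fst p)) + \<i> * of_real (l j * Im (fst p)),
                         complex_of_real (Re (snd p)) + \<i> * of_real (l j * Im (snd p)))" for j
  have l0: "0 \<le> l j" "l j < 1" for j
    by (auto simp: l_def field_simps)
  have "x j \<in> cyl_M \<epsilon>" for j
  proof -
    have "(l j)\<^sup>2 < 1" using l0[of j] by (simp add: power_less_one_iff abs_square_less_1)
    then have "(l j)\<^sup>2 * \<epsilon>\<^sup>2 < 1 * \<epsilon>\<^sup>2" using e by (intro mult_strict_right_mono) auto
    moreover have "(l j)\<^sup>2 * (Im (fst p))\<^sup>2 + (l j)\<^sup>2 * (Im (snd p))\<^sup>2 = (l j)\<^sup>2 * \<epsilon>\<^sup>2"
      using pe by (simp add: distrib_left[symmetric])
    ultimately show ?thesis by (simp add: x_def cyl_M_def power_mult_distrib)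
  qed
  moreover have "l \<longlonglongrightarrow> 1"
    unfolding l_def using tendsto_diff[OF tendsto_const LIMSEQ_inverse_real_of_nat, of 1] by simp
  then have "x \<longlonglongrightarrow> (complex_of_real (Re (fst p)) + \<i> * of_real (1 * Im (fst p)),
                         complex_of_real (Re (snd p)) + \<i> * of_real (1 * Im (snd p)))"
    unfolding x_def by (intro tendsto_intros)
  then have "x \<longlonglongrightarrow> p"
  proof -
    have ri: "complex_of_real (Re z) + \<i> * of_real (Im z) = z" for z
      by (simp add: complex_eq_iff)
    assume "x \<longlonglongrightarrow> (complex_of_real (Re (fst p)) + \<i> * of_real (1 * Im (fst p)),
                         complex_of_real (Re (snd p)) + \<i> * of_real (1 * Im (snd p)))"
    then show ?thesis by (simp only: mult_1 ri prod.collapse)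
  qed
  ultimately have "p \<in> closure (cyl_M \<epsilon>)"
    unfolding closure_sequential by blast
  moreover have "p \<notin> interior (cyl_M \<epsilon>)"
    using pe interior_open[OF cylM_open] by (simp add: cyl_M_def)
  ultimately show "p \<in> frontier (cyl_M \<epsilon>)" by (simp add: frontier_def)
qed




lemma free: "(\<exists>n::int. phi c t p = deck n p) \<Longrightarrow> t = 0"
  by (auto simp: phi_def deck_def)

lemma phi0: "phi c 0 = id"
  by (auto simp: phi_def fun_eq_iff)

lemma phi_add: "phi c (s + t) = phi c s \<circ> phi c t"
  by (auto simp: phi_def fun_eq_iff algebra_simps)

lemma phi_inv: "phi c t (phi c (-t) p) = p" "phi c (-t) (phi c t p) = p"
  by (auto simp: phi_def)

lemma phi_bij: "bij (phi c t)"
  by (rule o_bij[of "phi c (-t)"]) (auto simp: fun_eq_iff phi_inv)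

lemma phi_deck: "phi c t (deck n p) = deck n (phi c t p)"
  by (auto simp: phi_def deck_def algebra_simps)

lemma phi_holo: "holo_map UNIV (phi c t)"
proof -
  have d1: "((\<lambda>p::pt. fst (phi c t p)) has_derivative (\<lambda>v. fst v)) (at q)" for q
    unfolding phi_def by (auto intro!: derivative_eq_intros)
  have d2: "((\<lambda>p::pt. snd (phi c t p)) has_derivative (\<lambda>v. snd v)) (at q)" for q
    unfolding phi_def by (auto intro!: derivative_eq_intros)
  have l1: "\<forall>a v. fst (cmult a v) = a * fst v" and l2: "\<forall>a v. snd (cmult a v) = a * snd v"
    by (auto simp: cmult_def)
  have "holo2 UNIV (\<lambda>p. fst (phi c t p))"
    unfolding holo2_def using d1 l1 by blast
  moreover have "holo2 UNIV (\<lambda>p. snd (phi c t p))"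
    unfolding holo2_def using d2 l2 by blast
  ultimately show ?thesis by (simp add: holo_map_def)
qed

lemma Im_phi: "Im (fst (phi c t p)) = Im (fst p)" "Im (snd (phi c t p)) = Im (snd p)"
  by (auto simp: phi_def)

lemma image_inv:
  assumes "\<And>p t. p \<in> A \<Longrightarrow> phi c t p \<in> A"
  shows "phi c t ` A = A"
proof
  show "phi c t ` A \<subseteq> A" using assms by auto
  show "A \<subseteq> phi c t ` A"
  proof
    fix p assume "p \<in> A"
    then have "phi c (-t) p \<in> A" by (rule assms)
    then show "p \<in> phi c t ` A" using phi_inv(1)[of c t p] by (metis image_eqI)
  qed
qed

lemma phi_M: "phi c t ` cyl_M \<epsilon> = cyl_M \<epsilon>"
  by (rule image_inv) (simp add: cyl_M_def Im_phi)

lemma phi_S: "phi c t ` cyl_S \<epsilon> c = cyl_S \<epsilon> c"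
  by (rule image_inv) (unfold cyl_S_def mem_Collect_eq Im_phi, assumption)

lemma S_frontier: "\<epsilon> > 0 \<Longrightarrow> cyl_S \<epsilon> c \<subseteq> frontier (cyl_M \<epsilon>)"
  using sphere_frontier[of \<epsilon>] unfolding cyl_S_def by blast




lemma cocompact:
  assumes e: "\<epsilon> > 0"
  shows "\<exists>K. compact K \<and> closure (cyl_M \<epsilon>) \<subseteq> {q. \<exists>p\<in>K. \<exists>t. \<exists>n::int. q = deck n (phi c t p)}"
proof (intro exI conjI)
  let ?K = "cbox (Complex 0 (-\<epsilon>), Complex 0 (-\<epsilon>)) (Complex 1 \<epsilon>, Complex 0 \<epsilon>)"
  show "compact ?K" by (rule compact_cbox)
  let ?C = "{q::pt. (Im (fst q))\<^sup>2 + (Im (snd q))\<^sup>2 \<le> \<epsilon>\<^sup>2}"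
  have "closed ?C" by (intro closed_Collect_le continuous_intros)
  moreover have "cyl_M \<epsilon> \<subseteq> ?C" by (auto simp: cyl_M_def)
  ultimately have cl: "closure (cyl_M \<epsilon>) \<subseteq> ?C" by (rule closure_minimal[rotated])
  have "?C \<subseteq> {q. \<exists>p\<in>?K. \<exists>t. \<exists>n::int. q = deck n (phi c t p)}"
  proof
    fix q :: pt assume "q \<in> ?C"
    then have qc: "(Im (fst q))\<^sup>2 + (Im (snd q))\<^sup>2 \<le> \<epsilon>\<^sup>2" by simp
    have "(Im (fst q))\<^sup>2 \<le> \<epsilon>\<^sup>2" "(Im (snd q))\<^sup>2 \<le> \<epsilon>\<^sup>2" using qc by (smt (verit) zero_le_power2)+
    then have b: "\<bar>Im (fst q)\<bar> \<le> \<epsilon>" "\<bar>Im (snd q)\<bar> \<le> \<epsilon>"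
      using e by (simp_all add: power2_le_iff_abs_le)
    define t where "t = Re (snd q)"
    define n where "n = \<lfloor>Re (fst q) - c * t\<rfloor>"
    define p where "p = (fst q - of_real (c * t) - of_int n, snd q - of_real t)"
    have "q = deck n (phi c t p)" by (simp add: p_def phi_def deck_def)
    moreover have "p \<in> ?K"
    proof -
      have f1: "0 \<le> Re (fst q) - c * t - real_of_int n" "Re (fst q) - c * t - real_of_int n \<le> 1"
        unfolding n_def by (linarith, linarith)
      show ?thesis using f1 b
        by (simp add: mem_box Basis_pt p_def inner_prod_def inner_complex_def t_def abs_le_iff)
    qed
    ultimately show "q \<in> {q. \<exists>p\<in>?K. \<exists>t. \<exists>n::int. q = deck n (phi c t p)}" by blast
  qed
  with cl show "closure (cyl_M \<epsilon>) \<subseteq> {q. \<exists>p\<in>?K. \<exists>t. \<exists>n::int. q = deck n (phi c t p)}" by blast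
qed




lemma proper:
  assumes K: "compact K"
  shows "compact {t. \<exists>p\<in>K. \<exists>q\<in>K. \<exists>n::int. phi c t p = deck n q}"
proof -
  obtain B where B: "\<And>x. x \<in> K \<Longrightarrow> norm x \<le> B"
    using compact_imp_bounded[OF K] by (auto simp: bounded_iff)
  define \<tau> where "\<tau> z = Re (snd (snd z)) - Re (snd (fst z))" for z :: "pt \<times> pt"
  define S where "S n = (K \<times> K) \<inter> {z. phi c (\<tau> z) (fst z) = deck n (snd z)}" for n :: int
  have ct: "continuous_on UNIV \<tau>" unfolding \<tau>_def by (intro continuous_intros)
  have cS: "compact (S n)" for n
  proof -
    have "closed {z::pt\<times>pt. phi c (\<tau> z) (fst z) = deck n (snd z)}"
      unfolding phi_def deck_def \<tau>_def by (intro closed_Collect_eq continuous_intros)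
    then show ?thesis unfolding S_def by (intro compact_Int_closed compact_Times K)
  qed
  have cT: "compact (\<tau> ` S n)" for n
    by (rule compact_continuous_image[OF continuous_on_subset[OF ct] cS]) auto
  define N where "N = \<lceil>2 * B + 2 * \<bar>c\<bar> * B\<rceil>"
  have eq: "{t. \<exists>p\<in>K. \<exists>q\<in>K. \<exists>n::int. phi c t p = deck n q} = (\<Union>n\<in>{-N..N}. \<tau> ` S n)"
  proof
    show "(\<Union>n\<in>{-N..N}. \<tau> ` S n) \<subseteq> {t. \<exists>p\<in>K. \<exists>q\<in>K. \<exists>n::int. phi c t p = deck n q}"
      unfolding S_def by force
    show "{t. \<exists>p\<in>K. \<exists>q\<in>K. \<exists>n::int. phi c t p = deck n q} \<subseteq> (\<Union>n\<in>{-N..N}. \<tau> ` S n)"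
    proof
      fix t assume "t \<in> {t. \<exists>p\<in>K. \<exists>q\<in>K. \<exists>n::int. phi c t p = deck n q}"
      then obtain p q n where pq: "p \<in> K" "q \<in> K" and h: "phi c t p = deck n q" by blast
      have h1: "fst p + of_real (c * t) = fst q + of_int n" and h2: "snd p + of_real t = snd q"
        using h by (auto simp: phi_def deck_def)
      have tt: "t = \<tau> (p, q)" using arg_cong[OF h2, of Re] by (simp add: \<tau>_def)
      have nB: "norm (fst p) \<le> B" "norm (snd p) \<le> B" "norm (fst q) \<le> B" "norm (snd q) \<le> B"
        using B[OF pq(1)] B[OF pq(2)] norm_fst_le[of "fst p" "snd p"] norm_snd_le[where x="fst p" and y="snd p"]
          norm_fst_le[of "fst q" "snd q"] norm_snd_le[where x="fst q" and y="snd q"] by auto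
      have "\<bar>t\<bar> \<le> 2 * B"
        using tt abs_Re_le_cmod[of "snd p"] abs_Re_le_cmod[of "snd q"] nB by (simp add: \<tau>_def)
      then have ct2: "\<bar>c\<bar> * \<bar>t\<bar> \<le> \<bar>c\<bar> * (2 * B)" by (simp add: mult_left_mono)
      have "of_int n = fst p + of_real (c * t) - fst q" using h1 by simp
      then have nn: "cmod (of_int n) = cmod (fst p + of_real (c * t) - fst q)" by simp
      have "cmod (of_int n) \<le> cmod (fst p) + cmod (of_real (c * t)) + cmod (fst q)"
        unfolding nn using norm_triangle_ineq4[of "fst p + of_real (c * t)" "fst q"] norm_triangle_ineq[of "fst p" "of_real (c * t)"]
        by linarith
      also have "\<dots> \<le> B + \<bar>c\<bar> * (2 * B) + B"
      proof -
        have "cmod (of_real (c * t)) = \<bar>c\<bar> * \<bar>t\<bar>" by (simp only: norm_of_real abs_mult)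
        then show ?thesis using nB ct2 by linarith
      qed
      finally have "\<bar>real_of_int n\<bar> \<le> 2 * B + 2 * \<bar>c\<bar> * B" by simp
      then have "n \<in> {-N..N}" unfolding N_def by (simp add: abs_le_iff) linarith
      moreover have "(p, q) \<in> S n" unfolding S_def using pq h tt by simp
      ultimately show "t \<in> (\<Union>n\<in>{-N..N}. \<tau> ` S n)" using tt by blast
    qed
  qed
  show ?thesis unfolding eq by (intro compact_UN cT) auto
qed




lemma deriv_zero_local:
  fixes f :: "real \<Rightarrow> 'a::real_normed_vector"
  assumes D: "(f has_vector_derivative D) (at 0)" and d: "d > 0" and loc: "\<And>s. \<bar>s\<bar> < d \<Longrightarrow> f s = f 0"
  shows "D = 0"
proof -
  have "((\<lambda>s. f 0) has_vector_derivative 0) (at 0 within UNIV)" by simp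
  then have "(f has_vector_derivative 0) (at 0 within UNIV)"
  proof (rule has_vector_derivative_transform_within[OF _ d])
    fix x' :: real assume "dist x' 0 < d"
    then show "f 0 = f x'" using loc[of x'] by (simp add: dist_real_def)
  qed auto
  then show ?thesis using vector_derivative_unique_at[OF D] by simp
qed

lemma orbit_tangent:
  assumes v: "v \<in> tangent_space (cyl_orbit c p) p"
  shows "Im (snd v) = 0 \<and> fst v = of_real c * snd v"
proof -
  obtain \<gamma> \<delta> where dpos: "\<delta> > 0" and inS: "\<And>s. \<bar>s\<bar> < \<delta> \<Longrightarrow> \<gamma> s \<in> cyl_orbit c p"
    and g0: "\<gamma> 0 = p" and gd: "(\<gamma> has_vector_derivative v) (at 0)"
    using v unfolding tangent_space_def by blast
  have orb: "\<exists>t n. fst (\<gamma> s) = fst p + of_real (c * t) + of_int n \<and> snd (\<gamma> s) = snd p + of_real t" if "\<bar>s\<bar> < \<delta>" for s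
    using inS[OF that] unfolding cyl_orbit_def phi_def deck_def by auto
  have bl1: "bounded_linear (\<lambda>x::pt. Im (snd x))"
    by (intro bounded_linear_compose[OF bounded_linear_Im] bounded_linear_snd)
  have d1: "((\<lambda>s. Im (snd (\<gamma> s))) has_vector_derivative Im (snd v)) (at 0)"
    using bounded_linear.has_vector_derivative[OF bl1 gd] .
  have "Im (snd v) = 0"
  proof (rule deriv_zero_local[OF d1 dpos])
    fix s :: real assume "\<bar>s\<bar> < \<delta>"
    then obtain t n where tn: "fst (\<gamma> s) = fst p + of_real (c * t) + of_int n" "snd (\<gamma> s) = snd p + of_real t"
      using orb by blast
    then show "Im (snd (\<gamma> s)) = Im (snd (\<gamma> 0))" using g0 by simp
  qed
  moreover
  let ?L = "\<lambda>x::pt. fst x - of_real c * snd x"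
  have bl2: "bounded_linear ?L"
    by (intro bounded_linear_sub bounded_linear_fst bounded_linear_compose[OF bounded_linear_mult_right] bounded_linear_snd)
  have d2: "((\<lambda>s. ?L (\<gamma> s)) has_vector_derivative ?L v) (at 0)"
    using bounded_linear.has_vector_derivative[OF bl2 gd] .
  have "continuous (at 0) (\<lambda>s. ?L (\<gamma> s))"
    using has_vector_derivative_continuous[OF d2] .
  then have H: "\<forall>e>0. \<exists>d>0. \<forall>s. dist s 0 < d \<longrightarrow> dist (?L (\<gamma> s)) (?L (\<gamma> 0)) < e"
    unfolding continuous_at_eps_delta .
  obtain d where d: "d > 0" and dd: "\<And>s. dist s 0 < d \<Longrightarrow> dist (?L (\<gamma> s)) (?L (\<gamma> 0)) < 1/2"
    using H[rule_format, of "1/2"] by auto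
  have "?L v = 0"
  proof (rule deriv_zero_local[OF d2, of "min d \<delta>"])
    show "min d \<delta> > 0" using d dpos by simp
    fix s :: real assume s: "\<bar>s\<bar> < min d \<delta>"
    then obtain t n where tn: "fst (\<gamma> s) = fst p + of_real (c * t) + of_int n" "snd (\<gamma> s) = snd p + of_real t"
      using orb[of s] s by auto
    have "?L (\<gamma> s) - ?L (\<gamma> 0) = of_int n" using tn g0 by (simp add: algebra_simps)
    moreover have "cmod (?L (\<gamma> s) - ?L (\<gamma> 0)) < 1/2"
      using dd[of s] s by (simp add: dist_norm)
    ultimately have "\<bar>real_of_int n\<bar> < 1/2" by simp
    then have "n = 0" by linarith
    then show "?L (\<gamma> s) = ?L (\<gamma> 0)" using \<open>?L (\<gamma> s) - ?L (\<gamma> 0) = of_int n\<close> by simp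
  qed
  ultimately show ?thesis by simp
qed

lemma tangent_main:
  assumes e: "\<epsilon> > 0" and pS: "p \<in> cyl_S \<epsilon> c"
  shows "tangent_space (cyl_orbit c p) p \<subseteq> ctangent_space (frontier (cyl_M \<epsilon>)) p"
proof
  fix v assume v: "v \<in> tangent_space (cyl_orbit c p) p"
  define r where "r = Re (snd v)"
  have vr: "v = (of_real (c * r), of_real r)"
    using orbit_tangent[OF v] unfolding r_def by (simp add: prod_eq_iff complex_eq_iff)
  define y0 where "y0 = Im (fst p)"
  define y1 where "y1 = Im (snd p)"
  have py: "y0\<^sup>2 + y1\<^sup>2 = \<epsilon>\<^sup>2" "y1 = - c * y0" using pS by (auto simp: cyl_S_def y0_def y1_def)
  have y0nz: "y0 \<noteq> 0"
  proof
    assume "y0 = 0"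
    then have "\<epsilon>\<^sup>2 = 0" using py by simp
    then show False using e by simp
  qed
  have ri: "complex_of_real (Re z) + \<i> * of_real (Im z) = z" for z
    by (simp add: complex_eq_iff)
  have a: "v \<in> tangent_space (frontier (cyl_M \<epsilon>)) p"
    unfolding tangent_space_def mem_Collect_eq
  proof (intro exI[of _ "\<lambda>s. phi c (r * s) p"] exI[of _ "1::real"] conjI allI impI)
    show "(1::real) > 0" by simp
    fix s :: real
    have "phi c (r * s) p \<in> phi c (r * s) ` cyl_S \<epsilon> c" using pS by blast
    then have "phi c (r * s) p \<in> cyl_S \<epsilon> c" by (simp only: phi_S)
    then show "phi c (r * s) p \<in> frontier (cyl_M \<epsilon>)" using S_frontier[OF e] by blast
  next
    show "phi c (r * 0) p = p" by (simp add: phi_def)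
    have "((\<lambda>s. (fst p + of_real (c * (r * s)), snd p + of_real (r * s))) has_vector_derivative
        (of_real (c * r), of_real r)) (at 0)"
      by (auto intro!: derivative_eq_intros)
    then show "((\<lambda>s. phi c (r * s) p) has_vector_derivative v) (at 0)"
      by (simp add: phi_def vr)
  qed
  \<comment> \<open>(b) -i v is tangent to the frontier along a rotation\<close>
  define \<omega> where "\<omega> = - r / y0"
  define Y0 where "Y0 s = y0 * cos (\<omega> * s) - y1 * sin (\<omega> * s)" for s
  define Y1 where "Y1 s = y0 * sin (\<omega> * s) + y1 * cos (\<omega> * s)" for s
  define w where "w = (- \<i> * of_real (c * r), - \<i> * of_real r)"
  have wv: "v = cmult \<i> w" by (simp add: cmult_def w_def vr)
  have b: "w \<in> tangent_space (frontier (cyl_M \<epsilon>)) p"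
    unfolding tangent_space_def mem_Collect_eq
  proof (intro exI[of _ "\<lambda>s. (of_real (Re (fst p)) + \<i> * of_real (Y0 s), of_real (Re (snd p)) + \<i> * of_real (Y1 s))"] exI[of _ "1::real"] conjI allI impI)
    show "(1::real) > 0" by simp
    fix s :: real
    have rot: "(y0 * a - y1 * b)\<^sup>2 + (y0 * b + y1 * a)\<^sup>2 = (y0\<^sup>2 + y1\<^sup>2) * (b\<^sup>2 + a\<^sup>2)" for a b :: real
      by (simp add: power2_eq_square algebra_simps)
    have "(Y0 s)\<^sup>2 + (Y1 s)\<^sup>2 = (y0\<^sup>2 + y1\<^sup>2) * ((sin (\<omega> * s))\<^sup>2 + (cos (\<omega> * s))\<^sup>2)"
      unfolding Y0_def Y1_def by (rule rot)
    then have "(Y0 s)\<^sup>2 + (Y1 s)\<^sup>2 = \<epsilon>\<^sup>2" using py by simp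
    then show "(of_real (Re (fst p)) + \<i> * of_real (Y0 s), of_real (Re (snd p)) + \<i> * of_real (Y1 s)) \<in> frontier (cyl_M \<epsilon>)"
      using sphere_frontier[OF e] by auto
  next
    show "(of_real (Re (fst p)) + \<i> * of_real (Y0 0), of_real (Re (snd p)) + \<i> * of_real (Y1 0)) = p"
      by (simp add: Y0_def Y1_def y0_def y1_def ri)
    have d0: "(Y0 has_real_derivative (- y1 * \<omega>)) (at 0)"
      unfolding Y0_def by (auto intro!: derivative_eq_intros)
    have d1: "(Y1 has_real_derivative (y0 * \<omega>)) (at 0)"
      unfolding Y1_def by (auto intro!: derivative_eq_intros)
    have "((\<lambda>s. (of_real (Re (fst p)) + \<i> * of_real (Y0 s), of_real (Re (snd p)) + \<i> * of_real (Y1 s))) has_vector_derivative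
        (0 + \<i> * of_real (- y1 * \<omega>), 0 + \<i> * of_real (y0 * \<omega>))) (at 0)"
      by (intro has_vector_derivative_Pair has_vector_derivative_add has_vector_derivative_const
          has_vector_derivative_mult_right has_vector_derivative_of_real d0 d1)
    moreover have "(0 + \<i> * of_real (- y1 * \<omega>), 0 + \<i> * of_real (y0 * \<omega>)) = w"
      using y0nz py(2) by (simp add: w_def \<omega>_def field_simps)
    ultimately show "((\<lambda>s. (of_real (Re (fst p)) + \<i> * of_real (Y0 s), of_real (Re (snd p)) + \<i> * of_real (Y1 s))) has_vector_derivative w) (at 0)"
      by simp
  qed
  show "v \<in> ctangent_space (frontier (cyl_M \<epsilon>)) p"
    unfolding ctangent_space_def using a b wv by blast
qed


theorem mainTheorem13:
  fixes \<epsilon> c :: real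
  assumes "\<epsilon> > 0"
  shows
    "(\<forall>t p. (\<exists>n::int. phi c t p = deck n p) \<longrightarrow> t = 0)
   \<and> (\<forall>K. compact K \<longrightarrow> compact {t. \<exists>p\<in>K. \<exists>q\<in>K. \<exists>n::int. phi c t p = deck n q})
   \<and> (\<exists>K. compact K \<and> closure (cyl_M \<epsilon>) \<subseteq> {q. \<exists>p\<in>K. \<exists>t. \<exists>n::int. q = deck n (phi c t p)})
   \<and> phi c 0 = id \<and> (\<forall>s t. phi c (s + t) = phi c s \<circ> phi c t)
   \<and> (\<forall>t. holo_map UNIV (phi c t) \<and> bij (phi c t)
          \<and> (\<forall>n p. phi c t (deck n p) = deck n (phi c t p))
          \<and> phi c t ` cyl_M \<epsilon> = cyl_M \<epsilon>)
   \<and> cyl_S \<epsilon> c \<subseteq> frontier (cyl_M \<epsilon>) \<and> (\<forall>t. phi c t ` cyl_S \<epsilon> c = cyl_S \<epsilon> c)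
   \<and> (\<forall>p\<in>cyl_S \<epsilon> c. tangent_space (cyl_orbit c p) p \<subseteq> ctangent_space (frontier (cyl_M \<epsilon>)) p)
   \<and> G_dim (cyl_strip \<inter> cyl_M \<epsilon>) (cyl_strip \<inter> cyl_M \<epsilon> \<inter> G_fund) (L2O \<epsilon>) = \<infinity>"
  proof (intro conjI)
  show "\<forall>t p. (\<exists>n::int. phi c t p = deck n p) \<longrightarrow> t = 0"
    using free by blast
  show "\<forall>K. compact K \<longrightarrow> compact {t. \<exists>p\<in>K. \<exists>q\<in>K. \<exists>n::int. phi c t p = deck n q}"
    using proper by blast
  show "\<exists>K. compact K \<and> closure (cyl_M \<epsilon>) \<subseteq> {q. \<exists>p\<in>K. \<exists>t. \<exists>n::int. q = deck n (phi c t p)}"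
    by (rule cocompact[OF assms])
  show "phi c 0 = id" by (rule phi0)
  show "\<forall>s t. phi c (s + t) = phi c s \<circ> phi c t" using phi_add by blast
  show "\<forall>t. holo_map UNIV (phi c t) \<and> bij (phi c t)
          \<and> (\<forall>n p. phi c t (deck n p) = deck n (phi c t p))
          \<and> phi c t ` cyl_M \<epsilon> = cyl_M \<epsilon>"
    using phi_holo phi_bij phi_deck phi_M by blast
  show "cyl_S \<epsilon> c \<subseteq> frontier (cyl_M \<epsilon>)" by (rule S_frontier[OF assms])
  show "\<forall>t. phi c t ` cyl_S \<epsilon> c = cyl_S \<epsilon> c" using phi_S by blast
  show "\<forall>p\<in>cyl_S \<epsilon> c. tangent_space (cyl_orbit c p) p \<subseteq> ctangent_space (frontier (cyl_M \<epsilon>)) p"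
    using tangent_main[OF assms] by blast
  show "G_dim (cyl_strip \<inter> cyl_M \<epsilon>) (cyl_strip \<inter> cyl_M \<epsilon> \<inter> G_fund) (L2O \<epsilon>) = \<infinity>"
    by (rule Gdim_inf[OF assms])
qed

end
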